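(* Let $T$ be a linear transformation of a finite-dimensional real vector space $W$, and assume $W$ splits as a direct sum of (real) eigenspaces of $T$ with eigenvalues $\neq\pm1$. Let $W^+,W^-\subseteq W$ be subspaces with $\dim W^++\dim W^-=\dim W$ such that $W^+$ has zero intersection with the contracting subspace of $W$ and $W^-$ has zero intersection with the expanding subspace of $W$ determined by $T$. Then there is $K$ such that whenever $k^+,k^-$ are nonnegative integers with $k^++k^-\geq K$, $$W=T^{k^+}W^+\oplus T^{-k^-}W^-,$$ and moreover this decomposition is uniformly transverse in $k^\pm$: for a fixed inner product on $W$ there is $\epsilon>0$ such that for all such $k^\pm$, any unit vector in $T^{k^+}W^+$ and any unit vector in $T^{-k^-}W^-$ make an angle at least $\epsilon$.
   Context: The contracting (resp. expanding) subspace of $W$ determined by $T$ is the sum of the eigenspaces of $T$ whose eigenvalues have absolute value $<1$ (resp. $>1$). *)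

theory Defs
  imports "HOL-Analysis.Analysis"
begin

definition eigenspace :: "('a::real_vector \<Rightarrow> 'a) \<Rightarrow> real \<Rightarrow> 'a set" where
  "eigenspace T c = {x. T x = c *\<^sub>R x}"

definition contracting_subspace :: "('a::real_vector \<Rightarrow> 'a) \<Rightarrow> 'a set" where
  "contracting_subspace T = span (\<Union>{eigenspace T c | c. \<bar>c\<bar> < 1})"

definition expanding_subspace :: "('a::real_vector \<Rightarrow> 'a) \<Rightarrow> 'a set" where
  "expanding_subspace T = span (\<Union>{eigenspace T c | c. \<bar>c\<bar> > 1})"

definition vec_angle :: "'a::real_inner \<Rightarrow> 'a \<Rightarrow> real" where
  "vec_angle u v = arccos ((u \<bullet> v) / (norm u * norm v))"

end

theory Submission imports Defs begin

lemma rep_lin: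
  fixes B :: "'a::euclidean_space set"
  assumes "independent B" "span B = UNIV"
  shows "linear (\<lambda>v. representation B v b)"
  by (rule linearI) (simp_all add: representation_add representation_scale assms(1,2))

lemma rep_comb:
  fixes B :: "'a::euclidean_space set"
  assumes "independent B" "span B = UNIV" "finite B" "b \<in> B"
  shows "representation B (\<Sum>b'\<in>B. c b' *\<^sub>R b') b = c b"
proof -
  have lin: "linear (\<lambda>v. representation B v b)"
  proof -
    have e: "((*\<^sub>R) :: real \<Rightarrow> real \<Rightarrow> real) = (*)" by (intro ext) simp
    show ?thesis
      by (rule linearI) (simp_all add: representation_add representation_scale assms(1,2))
  qed
  have "representation B (\<Sum>b'\<in>B. c b' *\<^sub>R b') b = (\<Sum>b'\<in>B. c b' * representation B b' b)"
    by (simp add: linear_sum[OF lin] linear_scale[OF lin])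
  also have "\<dots> = (\<Sum>b'\<in>B. c b' * (if b = b' then 1 else 0))"
    by (intro sum.cong refl) (simp add: representation_basis[OF assms(1)])
  also have "\<dots> = c b" using assms(3,4) by (simp add: if_distrib cong: if_cong)
  finally show ?thesis .
qed

lemma rep_step:
  fixes B :: "'a::euclidean_space set"
  assumes "independent B" "span B = UNIV" "finite B" "linear S" "\<And>b. b \<in> B \<Longrightarrow> S b = \<mu> b *\<^sub>R b"
  shows "representation B (S x) b = \<mu> b * representation B x b"
proof (cases "b \<in> B")
  case True
  have x: "x = (\<Sum>b'\<in>B. representation B x b' *\<^sub>R b')"
    using sum_representation_eq[OF assms(1) _ assms(3)] assms(2) by simp
  have "S x = (\<Sum>b'\<in>B. representation B x b' *\<^sub>R S b')"
    by (subst x) (simp add: linear_sum[OF assms(4)] linear_scale[OF assms(4)])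
  also have "\<dots> = (\<Sum>b'\<in>B. (\<mu> b' * representation B x b') *\<^sub>R b')"
    by (intro sum.cong refl) (simp add: assms(5))
  finally show ?thesis using rep_comb[OF assms(1-3) True] by simp
next
  case False
  then have "representation B v b = 0" for v using representation_ne_zero by blast
  then show ?thesis by simp
qed

lemma rep_pow:
  fixes B :: "'a::euclidean_space set"
  assumes "independent B" "span B = UNIV" "finite B" "linear S" "\<And>b. b \<in> B \<Longrightarrow> S b = \<mu> b *\<^sub>R b"
  shows "representation B ((S ^^ k) x) b = \<mu> b ^ k * representation B x b"
proof (induction k)
  case 0 then show ?case by simp
next
  case (Suc k)
  have "representation B ((S ^^ Suc k) x) b = \<mu> b * representation B ((S ^^ k) x) b"
    using rep_step[OF assms] by simp
  then show ?case using Suc by simp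
qed


lemma normB_upper:
  fixes B :: "'a::euclidean_space set"
  assumes "independent B" "span B = UNIV" "finite B"
  shows "\<exists>c>0. \<forall>x. norm x \<le> c * (\<Sum>b\<in>B. \<bar>representation B x b\<bar>)"
proof (intro exI[of _ "1 + (\<Sum>b\<in>B. norm b)"] conjI allI)
  show "0 < 1 + (\<Sum>b\<in>B. norm b)" by (simp add: add_pos_nonneg sum_nonneg)
  fix x
  let ?N = "(\<Sum>b\<in>B. \<bar>representation B x b\<bar>)"
  have x: "x = (\<Sum>b\<in>B. representation B x b *\<^sub>R b)"
    using sum_representation_eq[OF assms(1) _ assms(3)] assms(2) by simp
  have le: "\<bar>representation B x b\<bar> \<le> ?N" if "b \<in> B" for b
    using member_le_sum[of b B "\<lambda>b. \<bar>representation B x b\<bar>"] that assms(3) by simp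
  have "norm x \<le> (\<Sum>b\<in>B. norm (representation B x b *\<^sub>R b))"
    by (subst x) (rule norm_sum)
  also have "\<dots> \<le> (\<Sum>b\<in>B. ?N * norm b)"
    by (intro sum_mono) (simp add: le mult_right_mono)
  also have "\<dots> = ?N * (\<Sum>b\<in>B. norm b)" by (simp add: sum_distrib_left)
  also have "\<dots> \<le> (1 + (\<Sum>b\<in>B. norm b)) * ?N"
    by (simp add: algebra_simps sum_nonneg)
  finally show "norm x \<le> (1 + (\<Sum>b\<in>B. norm b)) * ?N" .
qed

lemma normB_lower:
  fixes B :: "'a::euclidean_space set"
  assumes "independent B" "span B = UNIV" "finite B"
  shows "\<exists>c>0. \<forall>x. (\<Sum>b\<in>B. \<bar>representation B x b\<bar>) \<le> c * norm x"
proof -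
  have "\<forall>b\<in>B. \<exists>K. \<forall>x. norm (representation B x b) \<le> norm x * K"
  proof
    fix b
    have "bounded_linear (\<lambda>v. representation B v b)"
      using rep_lin[OF assms(1,2)] linear_conv_bounded_linear by blast
    then show "\<exists>K. \<forall>x. norm (representation B x b) \<le> norm x * K"
      using bounded_linear.bounded by blast
  qed
  then obtain K where K: "\<forall>b\<in>B. \<forall>x. norm (representation B x b) \<le> norm x * K b"
    by metis
  show ?thesis
  proof (intro exI[of _ "1 + (\<Sum>b\<in>B. \<bar>K b\<bar>)"] conjI allI)
    show "0 < 1 + (\<Sum>b\<in>B. \<bar>K b\<bar>)" by (simp add: add_pos_nonneg sum_nonneg)
    fix x
    have "(\<Sum>b\<in>B. \<bar>representation B x b\<bar>) \<le> (\<Sum>b\<in>B. norm x * \<bar>K b\<bar>)"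
    proof (intro sum_mono)
      fix b assume "b \<in> B"
      then have "\<bar>representation B x b\<bar> \<le> norm x * K b" using K by auto
      also have "\<dots> \<le> norm x * \<bar>K b\<bar>" by (simp add: mult_left_mono)
      finally show "\<bar>representation B x b\<bar> \<le> norm x * \<bar>K b\<bar>" .
    qed
    also have "\<dots> = norm x * (\<Sum>b\<in>B. \<bar>K b\<bar>)" by (simp add: sum_distrib_left)
    also have "\<dots> \<le> (1 + (\<Sum>b\<in>B. \<bar>K b\<bar>)) * norm x"
      by (simp add: algebra_simps)
    finally show "(\<Sum>b\<in>B. \<bar>representation B x b\<bar>) \<le> (1 + (\<Sum>b\<in>B. \<bar>K b\<bar>)) * norm x" .
  qed
qed


lemma cone:
  fixes B :: "'a::euclidean_space set"
  assumes indB: "independent B" and spB: "span B = UNIV" and finB: "finite B"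
    and BPQ: "B = P \<union> Q" "P \<inter> Q = {}" and W: "subspace W" and WQ: "W \<inter> span Q \<subseteq> {0}"
  shows "\<exists>\<alpha>\<ge>0. \<forall>w\<in>W. (\<Sum>b\<in>Q. \<bar>representation B w b\<bar>) \<le> \<alpha> * (\<Sum>b\<in>P. \<bar>representation B w b\<bar>)"
proof -
  let ?R = "representation B"
  have finP: "finite P" and finQ: "finite Q" using finB BPQ by auto
  define f where "f x = (\<Sum>b\<in>P. ?R x b *\<^sub>R b)" for x
  have f': "f x = (\<Sum>b\<in>B. (if b \<in> P then ?R x b else 0) *\<^sub>R b)" for x
    unfolding f_def using finB BPQ by (intro sum.mono_neutral_cong_left) auto
  have Rf: "?R (f x) b = (if b \<in> P then ?R x b else 0)" for x b
  proof (cases "b \<in> B")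
    case True then show ?thesis unfolding f' by (rule rep_comb[OF indB spB finB])
  next
    case False
    then have "?R v b = 0" for v using representation_ne_zero by blast
    then show ?thesis using False BPQ by auto
  qed
  have linf: "linear f"
    unfolding f_def by (intro linear_compose_sum ballI linearI)
      (simp_all add: representation_add representation_scale indB spB scaleR_add_left)
  have blf: "bounded_linear f" using linf linear_conv_bounded_linear by blast
  have inj: "\<forall>x\<in>W. f x = 0 \<longrightarrow> x = 0"
  proof (intro ballI impI)
    fix x assume xW: "x \<in> W" and fx: "f x = 0"
    have z: "?R x b = 0" if "b \<in> P" for b
      using Rf[of x b] fx that by (simp add: representation_zero)
    have "x = (\<Sum>b\<in>B. ?R x b *\<^sub>R b)"
      using sum_representation_eq[OF indB _ finB] spB by simp
    also have "\<dots> = (\<Sum>b\<in>P. ?R x b *\<^sub>R b) + (\<Sum>b\<in>Q. ?R x b *\<^sub>R b)"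
      using BPQ finP finQ by (simp add: sum.union_disjoint)
    also have "\<dots> = (\<Sum>b\<in>Q. ?R x b *\<^sub>R b)" using z by simp
    finally have "x \<in> span Q"
      by (metis (no_types, lifting) span_base span_scale span_sum)
    then show "x = 0" using xW WQ by auto
  qed
  obtain e where e: "e > 0" "\<forall>x\<in>W. norm (f x) \<ge> e * norm x"
    using injective_imp_isometric[OF closed_subspace[OF W] W blf inj] by blast
  obtain c2 where c2: "c2 > 0" "\<forall>x. norm x \<le> c2 * (\<Sum>b\<in>B. \<bar>?R x b\<bar>)"
    using normB_upper[OF indB spB finB] by blast
  obtain c3 where c3: "c3 > 0" "\<forall>x. (\<Sum>b\<in>B. \<bar>?R x b\<bar>) \<le> c3 * norm x"
    using normB_lower[OF indB spB finB] by blast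
  have split: "(\<Sum>b\<in>B. \<bar>?R x b\<bar>) = (\<Sum>b\<in>P. \<bar>?R x b\<bar>) + (\<Sum>b\<in>Q. \<bar>?R x b\<bar>)" for x
    using BPQ finP finQ by (simp add: sum.union_disjoint)
  have fP: "(\<Sum>b\<in>B. \<bar>?R (f x) b\<bar>) = (\<Sum>b\<in>P. \<bar>?R x b\<bar>)" for x
  proof -
    have "(\<Sum>b\<in>B. \<bar>?R (f x) b\<bar>) = (\<Sum>b\<in>B. if b \<in> P then \<bar>?R x b\<bar> else 0)"
      by (intro sum.cong) (auto simp: Rf)
    also have "\<dots> = (\<Sum>b\<in>{b\<in>B. b \<in> P}. \<bar>?R x b\<bar>)"
      using finB by (simp add: sum.inter_filter)
    also have "{b\<in>B. b \<in> P} = P" using BPQ by auto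
    finally show ?thesis .
  qed
  show ?thesis
  proof (intro exI[of _ "c3 * c2 / e"] conjI ballI)
    show "0 \<le> c3 * c2 / e" using c2 c3 e by simp
    fix w assume w: "w \<in> W"
    have "(\<Sum>b\<in>Q. \<bar>?R w b\<bar>) \<le> (\<Sum>b\<in>B. \<bar>?R w b\<bar>)"
      unfolding split by (simp add: sum_nonneg)
    also have "\<dots> \<le> c3 * norm w" using c3 by blast
    also have "\<dots> \<le> c3 * (norm (f w) / e)"
      using e w c3 by (simp add: field_simps mult_left_mono)
    also have "\<dots> \<le> c3 * (c2 * (\<Sum>b\<in>P. \<bar>?R w b\<bar>) / e)"
      using c2(2)[rule_format, of "f w"] c3 e unfolding fP
      by (intro mult_left_mono divide_right_mono) auto
    finally show "(\<Sum>b\<in>Q. \<bar>?R w b\<bar>) \<le> c3 * c2 / e * (\<Sum>b\<in>P. \<bar>?R w b\<bar>)"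
      by simp
  qed
qed


lemma core_ineq:
  fixes X Xm Y Yp Dp Dm a b Q :: real
  assumes "X \<ge> 0" "Xm \<ge> 0" "Y \<ge> 0" "Yp \<ge> 0" "Dp \<ge> 0" "Dm \<ge> 0" "a \<ge> 0" "b \<ge> 0"
    and "Xm \<le> a * X" "Yp \<le> b * Y" "Y \<le> Xm + Dm" "X \<le> Yp + Dp"
    and "a \<le> 1" "a * b \<le> 1/2" "b \<le> Q"
  shows "X + Xm \<le> 4 * (Q + 1) * (Dp + Dm)"
proof -
  have "Y \<le> a * X + Dm" using assms by linarith
  then have "b * Y \<le> b * (a * X + Dm)" using assms by (intro mult_left_mono) auto
  then have "X \<le> a * b * X + b * Dm + Dp" using assms by (simp add: algebra_simps)
  moreover have "a * b * X \<le> X / 2" using assms mult_right_mono[of "a*b" "1/2" X] by simp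
  moreover have "b * Dm \<le> Q * Dm" using assms by (intro mult_right_mono) auto
  ultimately have X2: "X \<le> 2 * (Q * Dm) + 2 * Dp" by linarith
  have Xm: "Xm \<le> X" using assms mult_right_mono[of a 1 X] by simp
  have Q0: "Q \<ge> 0" using assms by linarith
  have e: "(Q + 1) * (Dp + Dm) = Q * Dp + Q * Dm + Dp + Dm" by (simp add: algebra_simps)
  have "Q * Dp \<ge> 0" using Q0 assms by simp
  then have "Q * Dm + Dp \<le> (Q + 1) * (Dp + Dm)" using e assms by linarith
  moreover have "4 * (Q + 1) * (Dp + Dm) = 4 * ((Q + 1) * (Dp + Dm))" by simp
  ultimately show ?thesis using X2 Xm by linarith
qed

lemma linear_funpow:
  fixes f :: "'a::real_vector \<Rightarrow> 'a"
  assumes "linear f" shows "linear (f ^^ n)"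
proof (induction n)
  case 0 show ?case by (simp add: id_def linear_ident)
next
  case (Suc n) show ?case using linear_compose[OF Suc.IH assms] by (simp add: o_def)
qed


theorem lemma8p2:
  fixes T :: "'a::euclidean_space \<Rightarrow> 'a"
    and Wp Wm :: "'a set"
  assumes "linear T"
    and "bij T"
    and "span (\<Union>{eigenspace T c | c. c \<noteq> 1 \<and> c \<noteq> -1}) = UNIV"
    and "subspace Wp" and "subspace Wm"
    and "dim Wp + dim Wm = DIM('a)"
    and "Wp \<inter> contracting_subspace T = {0}"
    and "Wm \<inter> expanding_subspace T = {0}"
  shows "\<exists>K::nat.
     (\<forall>kp km. kp + km \<ge> K \<longrightarrow>
        {a + b | a b. a \<in> (T ^^ kp) ` Wp \<and> b \<in> (inv T ^^ km) ` Wm} = UNIV \<and>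
        (T ^^ kp) ` Wp \<inter> (inv T ^^ km) ` Wm = {0})
   \<and> (\<exists>\<epsilon>>0. \<forall>kp km. kp + km \<ge> K \<longrightarrow>
        (\<forall>u \<in> (T ^^ kp) ` Wp. \<forall>v \<in> (inv T ^^ km) ` Wm.
           norm u = 1 \<longrightarrow> norm v = 1 \<longrightarrow> vec_angle u v \<ge> \<epsilon>))"
proof -
  let ?S = "\<Union>{eigenspace T c | c. c \<noteq> 1 \<and> c \<noteq> -1}"
  obtain B where BS: "B \<subseteq> ?S" and indB: "independent B" and SB: "?S \<subseteq> span B"
    using maximal_independent_subset[of ?S] by blast
  have spB: "span B = UNIV"
    using span_mono[OF SB] assms(3) by (simp add: span_span top_le)
  have finB: "finite B" using finiteI_independent[OF indB] .
  have B0: "b \<in> B \<Longrightarrow> b \<noteq> 0" for b using dependent_zero indB by blast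
  have "\<forall>b\<in>B. \<exists>c. T b = c *\<^sub>R b \<and> c \<noteq> 1 \<and> c \<noteq> -1"
    using BS unfolding eigenspace_def by blast
  then obtain lam where lam: "\<And>b. b \<in> B \<Longrightarrow> T b = lam b *\<^sub>R b \<and> lam b \<noteq> 1 \<and> lam b \<noteq> -1"
    by metis
  have injT: "inj T" using assms(2) bij_is_inj by blast
  have lam0: "lam b \<noteq> 0" if "b \<in> B" for b
  proof
    assume "lam b = 0"
    then have "T b = T 0" using lam[OF that] linear_0[OF assms(1)] by simp
    then show False using injT B0[OF that] by (meson injD)
  qed
  have linI: "linear (inv T)" using inj_linear_imp_inv_linear[OF assms(1) injT] .
  have invb: "inv T b = inverse (lam b) *\<^sub>R b" if "b \<in> B" for b
  proof -
    have "T (inverse (lam b) *\<^sub>R b) = b"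
      using lam[OF that] lam0[OF that] linear_scale[OF assms(1)] by simp
    then show ?thesis using inv_f_f[OF injT] by metis
  qed
  let ?R = "representation B"
  have RT: "?R ((T ^^ k) x) b = lam b ^ k * ?R x b" for k x b
    using rep_pow[OF indB spB finB assms(1), of lam] lam by blast
  have RI: "?R ((inv T ^^ k) x) b = inverse (lam b) ^ k * ?R x b" for k x b
    using rep_pow[OF indB spB finB linI, of "\<lambda>b. inverse (lam b)"] invb by blast
  define Bp where "Bp = {b\<in>B. \<bar>lam b\<bar> > 1}"
  define Bm where "Bm = {b\<in>B. \<bar>lam b\<bar> < 1}"
  have abs1: "\<bar>lam b\<bar> \<noteq> 1" if "b \<in> B" for b using lam[OF that] by (auto simp: abs_if split: if_splits)
  have BPQ: "B = Bp \<union> Bm" "Bp \<inter> Bm = {}"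
    unfolding Bp_def Bm_def using abs1 by (auto simp: neq_iff)
  have finBp: "finite Bp" and finBm: "finite Bm" using finB BPQ by auto
  define Np where "Np x = (\<Sum>b\<in>Bp. \<bar>?R x b\<bar>)" for x
  define Nm where "Nm x = (\<Sum>b\<in>Bm. \<bar>?R x b\<bar>)" for x
  have Nsplit: "(\<Sum>b\<in>B. \<bar>?R x b\<bar>) = Np x + Nm x" for x
    unfolding Np_def Nm_def using BPQ finBp finBm by (simp add: sum.union_disjoint)
  have Np0: "Np x \<ge> 0" and Nm0: "Nm x \<ge> 0" for x
    unfolding Np_def Nm_def by (simp_all add: sum_nonneg)
  define g where "g b = (if \<bar>lam b\<bar> < 1 then \<bar>lam b\<bar> else inverse \<bar>lam b\<bar>)" for b
  define r where "r = Max (insert (1/2) (g ` B))"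
  have g1: "g b < 1" if "b \<in> B" for b
  proof (cases "\<bar>lam b\<bar> < 1")
    case True then show ?thesis unfolding g_def by simp
  next
    case False
    then have "\<bar>lam b\<bar> > 1" using abs1[OF that] by simp
    then show ?thesis using False unfolding g_def by (simp add: inverse_less_1_iff)
  qed
  have r1: "r < 1" unfolding r_def using finB g1 by (auto simp: Max_less_iff)
  have r0: "r \<ge> 1/2" unfolding r_def using finB by (intro Max_ge) auto
  have gr: "g b \<le> r" if "b \<in> B" for b unfolding r_def using finB that by (intro Max_ge) auto
  have rk1: "r ^ k \<le> 1" for k using r0 r1 by (simp add: power_le_one)
  have rk0: "r ^ k \<ge> 0" for k using r0 by simp
  have NmT: "Nm ((T ^^ k) x) \<le> r ^ k * Nm x" for k x
  proof -
    have "Nm ((T ^^ k) x) = (\<Sum>b\<in>Bm. \<bar>lam b\<bar> ^ k * \<bar>?R x b\<bar>)"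
      unfolding Nm_def RT by (simp add: abs_mult power_abs)
    also have "\<dots> \<le> (\<Sum>b\<in>Bm. r ^ k * \<bar>?R x b\<bar>)"
    proof (intro sum_mono mult_right_mono power_mono)
      fix b assume "b \<in> Bm"
      then show "\<bar>lam b\<bar> \<le> r" using gr[of b] unfolding Bm_def g_def by auto
    qed auto
    also have "\<dots> = r ^ k * Nm x" unfolding Nm_def by (simp add: sum_distrib_left)
    finally show ?thesis .
  qed
  have NpT: "Np x \<le> Np ((T ^^ k) x)" for k x
    unfolding Np_def RT
  proof (intro sum_mono)
    fix b assume "b \<in> Bp"
    then have "1 \<le> \<bar>lam b\<bar> ^ k" unfolding Bp_def by (simp add: one_le_power)
    then show "\<bar>?R x b\<bar> \<le> \<bar>lam b ^ k * ?R x b\<bar>"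
      by (simp add: abs_mult power_abs mult_le_cancel_right1)
  qed
  have NpI: "Np ((inv T ^^ k) x) \<le> r ^ k * Np x" for k x
  proof -
    have "Np ((inv T ^^ k) x) = (\<Sum>b\<in>Bp. inverse \<bar>lam b\<bar> ^ k * \<bar>?R x b\<bar>)"
      unfolding Np_def RI by (simp add: abs_mult power_abs)
    also have "\<dots> \<le> (\<Sum>b\<in>Bp. r ^ k * \<bar>?R x b\<bar>)"
    proof (intro sum_mono mult_right_mono power_mono)
      fix b assume "b \<in> Bp"
      then show "inverse \<bar>lam b\<bar> \<le> r" using gr[of b] unfolding Bp_def g_def by auto
    qed auto
    also have "\<dots> = r ^ k * Np x" unfolding Np_def by (simp add: sum_distrib_left)
    finally show ?thesis .
  qed
  have NmI: "Nm x \<le> Nm ((inv T ^^ k) x)" for k x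
    unfolding Nm_def RI
  proof (intro sum_mono)
    fix b assume b: "b \<in> Bm"
    then have "1 \<le> inverse \<bar>lam b\<bar>" using lam0[of b] unfolding Bm_def
      by (simp add: one_le_inverse)
    then have "1 \<le> \<bar>inverse (lam b)\<bar> ^ k" by (simp add: one_le_power)
    then show "\<bar>?R x b\<bar> \<le> \<bar>inverse (lam b) ^ k * ?R x b\<bar>"
      by (simp add: abs_mult power_abs mult_le_cancel_right1)
  qed
  have tri: "(\<Sum>b\<in>C. \<bar>?R x b\<bar>) \<le> (\<Sum>b\<in>C. \<bar>?R y b\<bar>) + (\<Sum>b\<in>C. \<bar>?R (x - y) b\<bar>)"
    "(\<Sum>b\<in>C. \<bar>?R x b\<bar>) \<le> (\<Sum>b\<in>C. \<bar>?R y b\<bar>) + (\<Sum>b\<in>C. \<bar>?R (y - x) b\<bar>)" for C x y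
    by (simp_all add: representation_diff indB spB sum.distrib[symmetric] sum_mono abs_triangle_ineq4 abs_minus_commute)
  have NpTri: "Np x \<le> Np y + Np (x - y)" "Np x \<le> Np y + Np (y - x)" for x y
    unfolding Np_def by (rule tri)+
  have NmTri: "Nm x \<le> Nm y + Nm (x - y)" "Nm x \<le> Nm y + Nm (y - x)" for x y
    unfolding Nm_def by (rule tri)+
  have "span Bm \<subseteq> contracting_subspace T"
    unfolding contracting_subspace_def
  proof (rule span_mono, rule subsetI)
    fix b assume b: "b \<in> Bm"
    then have "b \<in> eigenspace T (lam b)" "\<bar>lam b\<bar> < 1"
      using lam unfolding Bm_def eigenspace_def by auto
    then show "b \<in> \<Union>{eigenspace T c |c. \<bar>c\<bar> < 1}" by blast
  qed
  then have WpQ: "Wp \<inter> span Bm \<subseteq> {0}" using assms(7) by blast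
  have "span Bp \<subseteq> expanding_subspace T"
    unfolding expanding_subspace_def
  proof (rule span_mono, rule subsetI)
    fix b assume b: "b \<in> Bp"
    then have "b \<in> eigenspace T (lam b)" "\<bar>lam b\<bar> > 1"
      using lam unfolding Bp_def eigenspace_def by auto
    then show "b \<in> \<Union>{eigenspace T c |c. \<bar>c\<bar> > 1}" by blast
  qed
  then have WmQ: "Wm \<inter> span Bp \<subseteq> {0}" using assms(8) by blast
  obtain \<alpha> where \<alpha>0: "\<alpha> \<ge> 0" and \<alpha>: "\<And>w. w \<in> Wp \<Longrightarrow> Nm w \<le> \<alpha> * Np w"
    using cone[OF indB spB finB BPQ assms(4) WpQ] unfolding Np_def Nm_def by blast
  have BPQ': "B = Bm \<union> Bp" "Bm \<inter> Bp = {}" using BPQ by auto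
  obtain \<beta> where \<beta>0: "\<beta> \<ge> 0" and \<beta>: "\<And>w. w \<in> Wm \<Longrightarrow> Np w \<le> \<beta> * Nm w"
    using cone[OF indB spB finB BPQ' assms(5) WmQ] unfolding Np_def Nm_def by blast
  have coneU: "Nm u \<le> (r ^ kp * \<alpha>) * Np u" if uin: "u \<in> (T ^^ kp) ` Wp" for u kp
  proof -
    obtain w where w: "w \<in> Wp" "u = (T ^^ kp) w" using uin by blast
    have "Nm u \<le> r ^ kp * Nm w" using NmT w(2) by simp
    also have "\<dots> \<le> r ^ kp * (\<alpha> * Np w)" using \<alpha>[OF w(1)] rk0 by (intro mult_left_mono) auto
    also have "\<dots> \<le> r ^ kp * (\<alpha> * Np u)" using NpT[of w kp] w(2) rk0 \<alpha>0
      by (intro mult_left_mono) auto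
    finally show ?thesis by (simp add: mult.assoc)
  qed
  have coneV: "Np v \<le> (r ^ km * \<beta>) * Nm v" if vin: "v \<in> (inv T ^^ km) ` Wm" for v km
  proof -
    obtain w where w: "w \<in> Wm" "v = (inv T ^^ km) w" using vin by blast
    have "Np v \<le> r ^ km * Np w" using NpI w(2) by simp
    also have "\<dots> \<le> r ^ km * (\<beta> * Nm w)" using \<beta>[OF w(1)] rk0 by (intro mult_left_mono) auto
    also have "\<dots> \<le> r ^ km * (\<beta> * Nm v)" using NmI[of w km] w(2) rk0 \<beta>0
      by (intro mult_left_mono) auto
    finally show ?thesis by (simp add: mult.assoc)
  qed
  obtain c2 where c2: "c2 > 0" "\<And>x. norm x \<le> c2 * (Np x + Nm x)"
    using normB_upper[OF indB spB finB] unfolding Nsplit by blast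
  obtain c3 where c3: "c3 > 0" "\<And>x. Np x + Nm x \<le> c3 * norm x"
    using normB_lower[OF indB spB finB] unfolding Nsplit by blast
  define Q where "Q = max \<alpha> \<beta>"
  have Q0: "Q \<ge> 0" unfolding Q_def using \<alpha>0 by simp
  define \<eta> where "\<eta> = 1 / (2 * (Q + 1))"
  have \<eta>0: "\<eta> > 0" unfolding \<eta>_def using Q0 by simp
  have \<eta>Q: "\<eta> * Q \<le> 1/2" "\<eta> \<le> 1/2" unfolding \<eta>_def using Q0 by (simp_all add: field_simps)
  obtain K0 where K0: "r ^ K0 < \<eta> / (Q + 1)"
    using real_arch_pow_inv[of "\<eta> / (Q + 1)" r] \<eta>0 Q0 r1 by auto
  have smallK: "r ^ k * Q \<le> \<eta>" if "k \<ge> K0" for k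
  proof -
    have "r ^ k \<le> r ^ K0" using that r0 r1 by (intro power_decreasing) auto
    then have "r ^ k * (Q + 1) \<le> r ^ K0 * (Q + 1)" using Q0 by (intro mult_right_mono) auto
    moreover have "r ^ K0 * (Q + 1) < \<eta>" using K0 Q0 by (simp add: pos_less_divide_eq)
    ultimately have "r ^ k * (Q + 1) \<le> \<eta>" by linarith
    then show ?thesis using Q0 rk0[of k] by (smt (verit) mult_nonneg_nonneg distrib_left mult.commute)
  qed
  define \<delta> where "\<delta> = 1 / (4 * (Q + 1) * c2 * c3)"
  have \<delta>0: "\<delta> > 0" unfolding \<delta>_def using Q0 c2 c3 by simp
  have key: "\<delta> \<le> norm (u - v)"
    if K: "kp + km \<ge> 2 * K0" and u: "u \<in> (T ^^ kp) ` Wp" and v: "v \<in> (inv T ^^ km) ` Wm"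
      and nu: "norm u = 1" and nv: "norm v = 1" for kp km u v
  proof -
    define a where "a = r ^ kp * \<alpha>"
    define b where "b = r ^ km * \<beta>"
    have a0: "a \<ge> 0" and b0: "b \<ge> 0" unfolding a_def b_def using rk0 \<alpha>0 \<beta>0 by auto
    have aQ: "a \<le> Q" unfolding a_def Q_def using rk1[of kp] rk0[of kp] \<alpha>0
      by (smt (verit) max.cobounded1 mult_left_le_one_le)
    have bQ: "b \<le> Q" unfolding b_def Q_def using rk1[of km] rk0[of km] \<beta>0
      by (smt (verit) max.cobounded2 mult_left_le_one_le)
    have cu: "Nm u \<le> a * Np u" unfolding a_def using coneU[OF u] .
    have cv: "Np v \<le> b * Nm v" unfolding b_def using coneV[OF v] .
    have D: "Np (u - v) + Nm (u - v) \<le> c3 * norm (u - v)" using c3 by blast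
    have main: "1 \<le> c2 * (4 * (Q + 1) * (Np (u - v) + Nm (u - v)))"
    proof (cases "kp \<ge> K0")
      case True
      have "a \<le> r ^ kp * Q" unfolding a_def Q_def using rk0[of kp] by (simp add: mult_left_mono)
      then have aeta: "a \<le> \<eta>" using smallK[OF True] by simp
      have ab: "a * b \<le> 1/2"
        using mult_mono[OF aeta bQ] \<eta>0 b0 \<eta>Q by linarith
      have "Np u + Nm u \<le> 4 * (Q + 1) * (Np (u - v) + Nm (u - v))"
        by (rule core_ineq[where Y = "Nm v" and Yp = "Np v" and a = a and b = b])
           (use Np0 Nm0 a0 b0 cu cv NmTri(2)[of v u] NpTri(1)[of u v] aeta \<eta>Q ab bQ in auto)
      then show ?thesis using c2(2)[of u] nu c2(1) by (smt (verit) mult_left_mono)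
    next
      case False
      then have "km \<ge> K0" using K by linarith
      have "b \<le> r ^ km * Q" unfolding b_def Q_def using rk0[of km] by (simp add: mult_left_mono)
      then have beta: "b \<le> \<eta>" using smallK[OF \<open>km \<ge> K0\<close>] by simp
      have ab: "b * a \<le> 1/2"
        using mult_mono[OF beta aQ] \<eta>0 a0 \<eta>Q by linarith
      have "Nm v + Np v \<le> 4 * (Q + 1) * (Nm (u - v) + Np (u - v))"
        by (rule core_ineq[where Y = "Np u" and Yp = "Nm u" and a = b and b = a])
           (use Np0 Nm0 a0 b0 cu cv NpTri(1)[of u v] NmTri(2)[of v u] beta \<eta>Q ab aQ in auto)
      then show ?thesis using c2(2)[of v] nv c2(1) by (smt (verit) mult_left_mono)
    qed
    also have "\<dots> \<le> c2 * (4 * (Q + 1) * (c3 * norm (u - v)))"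
      using D c2(1) Q0 by (intro mult_left_mono) auto
    finally have "1 \<le> (4 * (Q + 1) * c2 * c3) * norm (u - v)" by (simp add: algebra_simps)
    then have f1: "1 \<le> norm (u - v) * (4 * (Q + 1) * c2 * c3)" by (simp only: mult.commute)
    have pos: "4 * (Q + 1) * c2 * c3 > 0" using Q0 c2(1) c3(1) by simp
    show ?thesis unfolding \<delta>_def using f1 by (simp only: pos_divide_le_eq[OF pos])
  qed
  define K where "K = 2 * K0"
  have linTk: "linear (T ^^ k)" for k using linear_funpow[OF assms(1)] .
  have linIk: "linear (inv T ^^ k)" for k using linear_funpow[OF linI] .
  have injTk: "inj (T ^^ k)" for k using inj_fn[OF injT] .
  have injI: "inj (inv T)" using bij_imp_bij_inv[OF assms(2)] bij_is_inj by blast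
  have injIk: "inj (inv T ^^ k)" for k using inj_fn[OF injI] .
  have subU: "subspace ((T ^^ k) ` Wp)" for k using linear_subspace_image[OF linTk assms(4)] .
  have subV: "subspace ((inv T ^^ k) ` Wm)" for k using linear_subspace_image[OF linIk assms(5)] .
  have dimU: "dim ((T ^^ k) ` Wp) = dim Wp" for k
    using dim_image_eq[OF linTk inj_on_subset[OF injTk subset_UNIV]] .
  have dimV: "dim ((inv T ^^ k) ` Wm) = dim Wm" for k
    using dim_image_eq[OF linIk inj_on_subset[OF injIk subset_UNIV]] .
  have inter: "(T ^^ kp) ` Wp \<inter> (inv T ^^ km) ` Wm = {0}" if kk: "kp + km \<ge> K" for kp km
  proof
    show "{0} \<subseteq> (T ^^ kp) ` Wp \<inter> (inv T ^^ km) ` Wm"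
      using subspace_0[OF subU] subspace_0[OF subV] by auto
    show "(T ^^ kp) ` Wp \<inter> (inv T ^^ km) ` Wm \<subseteq> {0}"
    proof
      fix z assume z: "z \<in> (T ^^ kp) ` Wp \<inter> (inv T ^^ km) ` Wm"
      show "z \<in> {0}"
      proof (rule ccontr)
        assume "z \<notin> {0}" then have nz: "z \<noteq> 0" by simp
        let ?u = "inverse (norm z) *\<^sub>R z"
        have u1: "?u \<in> (T ^^ kp) ` Wp" using subspace_scale[OF subU] z by blast
        have u2: "?u \<in> (inv T ^^ km) ` Wm" using subspace_scale[OF subV] z by blast
        have "norm ?u = 1" using nz by simp
        then have "\<delta> \<le> norm (?u - ?u)" using key[OF _ u1 u2] kk unfolding K_def by blast
        then show False using \<delta>0 by simp
      qed
    qed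
  qed
  have sums: "{a + b | a b. a \<in> (T ^^ kp) ` Wp \<and> b \<in> (inv T ^^ km) ` Wm} = UNIV"
    if kk: "kp + km \<ge> K" for kp km
  proof -
    let ?U = "(T ^^ kp) ` Wp" and ?V = "(inv T ^^ km) ` Wm"
    let ?M = "{a + b | a b. a \<in> ?U \<and> b \<in> ?V}"
    have d1: "dim ?M + dim (?U \<inter> ?V) = dim ?U + dim ?V"
      using dim_sums_Int[OF subU[of kp] subV[of km]] .
    have d2: "dim (?U \<inter> ?V) = 0"
    proof -
      have "?U \<inter> ?V \<subseteq> {0}" using inter[of kp km] kk by blast
      then show ?thesis by (rule dim_eq_0[THEN iffD2])
    qed
    have d3: "dim ?M = DIM('a)"
      using d1 d2 dimU[of kp] dimV[of km] assms(6) by linarith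
    have e1: "span ?M = UNIV" using dim_eq_full[THEN iffD1, OF d3] .
    have e2: "span ?M = ?M" using span_eq_iff[THEN iffD2, OF subspace_sums[OF subU[of kp] subV[of km]]] .
    have "?M = span ?M" using e2 by (rule sym)
    also have "\<dots> = UNIV" by (rule e1)
    finally show ?thesis .
  qed
  define \<delta>' where "\<delta>' = min \<delta> 1"
  have d'0: "\<delta>' > 0" "\<delta>' \<le> 1" "\<delta>' \<le> \<delta>" unfolding \<delta>'_def using \<delta>0 by auto
  define \<epsilon> where "\<epsilon> = arccos (1 - \<delta>'^2/2)"
  have d2: "\<delta>'^2 \<le> 1" "\<delta>'^2 > 0" using d'0 by (simp_all add: power_le_one)
  have \<epsilon>0: "\<epsilon> > 0"
    using arccos_less_arccos[of "1 - \<delta>'^2/2" 1] d2 unfolding \<epsilon>_def by simp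
  have ang: "\<epsilon> \<le> vec_angle u v"
    if kk: "kp + km \<ge> K" and u: "u \<in> (T ^^ kp) ` Wp" and v: "v \<in> (inv T ^^ km) ` Wm"
      and nu: "norm u = 1" and nv: "norm v = 1" for kp km u v
  proof -
    have dl: "\<delta>' \<le> norm (u - v)" using key[OF _ u v nu nv] kk d'0 unfolding K_def by linarith
    have "\<delta>'^2 \<le> norm (u - v) ^ 2" using dl d'0 by (intro power_mono) auto
    also have "norm (u - v) ^ 2 = (u - v) \<bullet> (u - v)" by (simp add: power2_norm_eq_inner)
    also have "\<dots> = u \<bullet> u - 2 * (u \<bullet> v) + v \<bullet> v" by (simp add: inner_diff inner_commute algebra_simps)
    also have "u \<bullet> u = 1" using nu by (metis power2_norm_eq_inner power_one)
    also have "v \<bullet> v = 1" using nv by (metis power2_norm_eq_inner power_one)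
    finally have le: "u \<bullet> v \<le> 1 - \<delta>'^2/2" by simp
    have ge: "-1 \<le> u \<bullet> v" using Cauchy_Schwarz_ineq2[of u v] nu nv by (simp add: abs_le_iff)
    have "vec_angle u v = arccos (u \<bullet> v)" unfolding vec_angle_def using nu nv by simp
    then show ?thesis unfolding \<epsilon>_def using arccos_le_arccos[OF ge le] d2 by simp
  qed
  show ?thesis
  proof (intro exI[of _ K] conjI allI impI)
    fix kp km assume "kp + km \<ge> K"
    then show "{a + b | a b. a \<in> (T ^^ kp) ` Wp \<and> b \<in> (inv T ^^ km) ` Wm} = UNIV"
      "(T ^^ kp) ` Wp \<inter> (inv T ^^ km) ` Wm = {0}" using sums inter by auto
  next
    show "\<exists>\<epsilon>>0. \<forall>kp km. kp + km \<ge> K \<longrightarrow>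
        (\<forall>u \<in> (T ^^ kp) ` Wp. \<forall>v \<in> (inv T ^^ km) ` Wm.
           norm u = 1 \<longrightarrow> norm v = 1 \<longrightarrow> vec_angle u v \<ge> \<epsilon>)"
      using \<epsilon>0 ang by blast
  qed
qed

end
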